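(* Let $H$ be a non-total attractor hull of a $k$-oriented Spherical Diagram $\mathcal D$, and let $x$ be a point of intersection between an arc of $\mathcal D$ and the interior of $H$. Then there are three distinct arcs of $\mathcal D$ that thrust the boundary of $H$ at three distinct points, not all lying on the same edge of $H$, each of which is internally $H$-connected (with respect to $\mathcal D$) with $x$.
   Context: A geodesic arc on the unit sphere in $\mathbb R^3$ is the unique shortest curve joining two non-antipodal points. An arc $a$ blocks an arc $b$ (equivalently, $b$ hits $a$) if an endpoint of $b$ lies in the relative interior of $a$. A Spherical Diagram (SD) is a finite non-empty collection $\mathcal D$ of pairwise interior-disjoint geodesic arcs on the unit sphere such that each arc of $\mathcal D$ is blocked by arcs of $\mathcal D$ at each of its endpoints. An SD $\mathcal D$ is $k$-oriented if there exist a set $P$ of $k$ points on the unit sphere (poles), no two antipodal, and a function $f\colon\mathcal D\to P$ such that each arc $a\in\mathcal D$ lies on a great circle through $f(a)$ but contains neither $f(a)$ nor its antipode $-f(a)$ (the anti-pole of $f(a)$). An attractor of a $k$-oriented SD is a set of $k$ points, no two antipodal, chosen among its poles and anti-poles. An attractor hull is the spherical convex hull of an attractor; it is total if it is the whole sphere (otherwise it is a spherical polygon contained in the interior of a hemisphere). For a spherical polygon $R$ contained in the interior of a hemisphere, an arc $a$ thrusts the boundary of $R$ at a point $y$ if $y\in a\cap\partial R$ and $a$ also intersects the interior of $R$. For a region $R$, two points are internally $R$-connected (with respect to $\mathcal D$) if there is a path between them contained in the union of the arcs of $\mathcal D$, all of whose points except possibly its endpoints lie in the interior of $R$. *)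

theory Defs
  imports "HOL-Analysis.Analysis"
begin

definition S2 :: "(real^3) set" where
  "S2 = sphere 0 1"

text \<open>A geodesic arc is represented by the pair of its endpoints (p, q): two distinct,
non-antipodal points of the unit sphere.\<close>
type_synonym arc = "(real^3) \<times> (real^3)"

definition valid_arc :: "arc \<Rightarrow> bool" where
  "valid_arc a \<longleftrightarrow> fst a \<in> S2 \<and> snd a \<in> S2 \<and> fst a \<noteq> snd a \<and> snd a \<noteq> - fst a"

definition arc_set :: "arc \<Rightarrow> (real^3) set" where
  "arc_set a = (\<lambda>v. v /\<^sub>R norm v) ` closed_segment (fst a) (snd a)"

definition arc_relint :: "arc \<Rightarrow> (real^3) set" where
  "arc_relint a = (\<lambda>v. v /\<^sub>R norm v) ` open_segment (fst a) (snd a)"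

definition blocks :: "arc \<Rightarrow> arc \<Rightarrow> bool" where
  "blocks a b \<longleftrightarrow> fst b \<in> arc_relint a \<or> snd b \<in> arc_relint a"

definition spherical_diagram :: "arc set \<Rightarrow> bool" where
  "spherical_diagram D \<longleftrightarrow>
     finite D \<and> D \<noteq> {} \<and> (\<forall>a\<in>D. valid_arc a) \<and>
     (\<forall>a\<in>D. \<forall>b\<in>D. a \<noteq> b \<longrightarrow> arc_relint a \<inter> arc_relint b = {}) \<and>
     (\<forall>b\<in>D. (\<exists>a\<in>D. fst b \<in> arc_relint a) \<and> (\<exists>a\<in>D. snd b \<in> arc_relint a))"

definition k_oriented_by :: "nat \<Rightarrow> arc set \<Rightarrow> (real^3) set \<Rightarrow> (arc \<Rightarrow> real^3) \<Rightarrow> bool" where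
  "k_oriented_by k D P f \<longleftrightarrow>
     spherical_diagram D \<and> P \<subseteq> S2 \<and> finite P \<and> card P = k \<and> (\<forall>p\<in>P. - p \<notin> P) \<and>
     (\<forall>a\<in>D. f a \<in> P \<and>
        (\<exists>u. u \<noteq> 0 \<and> inner u (f a) = 0 \<and> (\<forall>z\<in>arc_set a. inner u z = 0)) \<and>
        f a \<notin> arc_set a \<and> - f a \<notin> arc_set a)"

definition attractor :: "nat \<Rightarrow> (real^3) set \<Rightarrow> (real^3) set \<Rightarrow> bool" where
  "attractor k P A \<longleftrightarrow> A \<subseteq> P \<union> uminus ` P \<and> finite A \<and> card A = k \<and> (\<forall>a\<in>A. - a \<notin> A)"

text \<open>Spherical convex hull: the trace on the sphere of the convex cone generated by A
when A lies in an open hemisphere; otherwise (convention) the whole sphere.\<close>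
definition sph_hull :: "(real^3) set \<Rightarrow> (real^3) set" where
  "sph_hull A = (if \<exists>u. \<forall>a\<in>A. inner u a > 0
                 then S2 \<inter> {c *\<^sub>R v | c v. c \<ge> 0 \<and> v \<in> convex hull A}
                 else S2)"

definition sph_interior :: "(real^3) set \<Rightarrow> (real^3) set" where
  "sph_interior R = {y \<in> R. \<exists>e>0. \<forall>z\<in>S2. dist z y < e \<longrightarrow> z \<in> R}"

definition sph_boundary :: "(real^3) set \<Rightarrow> (real^3) set" where
  "sph_boundary R = closure R - sph_interior R"

definition thrusts :: "arc \<Rightarrow> (real^3) set \<Rightarrow> real^3 \<Rightarrow> bool" where
  "thrusts a R y \<longleftrightarrow> y \<in> arc_set a \<and> y \<in> sph_boundary R \<and> arc_set a \<inter> sph_interior R \<noteq> {}"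

definition sph_edge :: "(real^3) set \<Rightarrow> (real^3) set \<Rightarrow> bool" where
  "sph_edge R E \<longleftrightarrow> (\<exists>u. u \<noteq> 0 \<and> (\<forall>z\<in>R. inner u z \<ge> 0) \<and> E = {z\<in>R. inner u z = 0}
                        \<and> (\<exists>z1\<in>E. \<exists>z2\<in>E. z1 \<noteq> z2))"

definition int_connected :: "arc set \<Rightarrow> (real^3) set \<Rightarrow> real^3 \<Rightarrow> real^3 \<Rightarrow> bool" where
  "int_connected D R x y \<longleftrightarrow>
     (\<exists>g. path g \<and> pathstart g = x \<and> pathfinish g = y \<and>
          path_image g \<subseteq> \<Union>(arc_set ` D) \<and> (\<forall>t\<in>{0<..<1}. g t \<in> sph_interior R))"

end

theory Submission
  imports Defs
begin

unbundle cross3_syntax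


definition nrm :: "real^3 \<Rightarrow> real^3" where "nrm v = v /\<^sub>R norm v"
definition seg :: "arc \<Rightarrow> real \<Rightarrow> real^3" where "seg a t = (1 - t) *\<^sub>R fst a + t *\<^sub>R snd a"

lemma arc_set_eq: "arc_set a = (\<lambda>t. nrm (seg a t)) ` {0..1}"
  unfolding arc_set_def closed_segment_image_interval seg_def nrm_def by (simp add: image_image)

lemma arc_relint_eq: "fst a \<noteq> snd a \<Longrightarrow> arc_relint a = (\<lambda>t. nrm (seg a t)) ` {0<..<1}"
  unfolding arc_relint_def open_segment_image_interval seg_def nrm_def by (simp add: image_image)

lemma S2_iff: "z \<in> S2 \<longleftrightarrow> norm z = 1" by (simp add: S2_def)

lemma triple_id:
  fixes p q c u :: "real^3"
  shows "((p \<times> q) \<bullet> c) *\<^sub>R u = (u \<bullet> p) *\<^sub>R (q \<times> c) + (u \<bullet> q) *\<^sub>R (c \<times> p) + (u \<bullet> c) *\<^sub>R (p \<times> q)"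
  unfolding vec_eq_iff forall_3 by (simp add: cross3_def inner_vec_def sum_3 vector_def algebra_simps)

lemma span_id:
  fixes p q c :: "real^3"
  shows "((p \<times> q) \<bullet> (p \<times> q)) *\<^sub>R c = ((c \<times> q) \<bullet> (p \<times> q)) *\<^sub>R p + ((p \<times> c) \<bullet> (p \<times> q)) *\<^sub>R q + ((p \<times> q) \<bullet> c) *\<^sub>R (p \<times> q)"
  unfolding vec_eq_iff forall_3 by (simp add: cross3_def inner_vec_def sum_3 vector_def algebra_simps)

lemma det_zero:
  fixes p q c u :: "real^3"
  assumes "u \<noteq> 0" "u \<bullet> p = 0" "u \<bullet> q = 0" "u \<bullet> c = 0"
  shows "(p \<times> q) \<bullet> c = 0"
  using triple_id[of p q c u] assms by simp

lemma in_span2: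
  fixes p q c :: "real^3"
  assumes "p \<times> q \<noteq> 0" "(p \<times> q) \<bullet> c = 0"
  shows "\<exists>\<alpha> \<beta>. c = \<alpha> *\<^sub>R p + \<beta> *\<^sub>R q"
proof -
  let ?n = "p \<times> q"
  have nn: "?n \<bullet> ?n \<noteq> 0" using assms(1) by simp
  have "(?n \<bullet> ?n) *\<^sub>R c = ((c \<times> q) \<bullet> ?n) *\<^sub>R p + ((p \<times> c) \<bullet> ?n) *\<^sub>R q"
    using span_id[of p q c] assms(2) by simp
  then have "c = (((c \<times> q) \<bullet> ?n) / (?n \<bullet> ?n)) *\<^sub>R p + (((p \<times> c) \<bullet> ?n) / (?n \<bullet> ?n)) *\<^sub>R q"
  proof -
    have "c = inverse (?n \<bullet> ?n) *\<^sub>R ((?n \<bullet> ?n) *\<^sub>R c)" using nn by simp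
    also have "\<dots> = inverse (?n \<bullet> ?n) *\<^sub>R (((c \<times> q) \<bullet> ?n) *\<^sub>R p + ((p \<times> c) \<bullet> ?n) *\<^sub>R q)"
      using \<open>(?n \<bullet> ?n) *\<^sub>R c = _\<close> by simp
    finally show ?thesis by (simp add: scaleR_add_right divide_inverse_commute)
  qed
  then show ?thesis by blast
qed

lemma cross_unit_nz:
  fixes p q :: "real^3"
  assumes "norm p = 1" "norm q = 1" "p \<noteq> q" "q \<noteq> - p"
  shows "p \<times> q \<noteq> 0"
proof
  assume h: "p \<times> q = 0"
  have "(norm (p \<times> q))\<^sup>2 + (p \<bullet> q)\<^sup>2 = (norm p * norm q)\<^sup>2" by (rule norm_cross_dot)
  then have "(p \<bullet> q)\<^sup>2 = 1" using h assms(1,2) by simp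
  then have "p \<bullet> q = 1 \<or> p \<bullet> q = -1" by (simp add: power2_eq_1_iff)
  moreover have pp: "p \<bullet> p = 1" "q \<bullet> q = 1" using assms(1,2) by (simp_all add: dot_square_norm)
  moreover have "(p - q) \<bullet> (p - q) = p \<bullet> p + q \<bullet> q - 2 * (p \<bullet> q)"
    by (simp add: inner_diff_left inner_diff_right inner_commute)
  moreover have "(p + q) \<bullet> (p + q) = p \<bullet> p + q \<bullet> q + 2 * (p \<bullet> q)"
    by (simp add: inner_add_left inner_add_right inner_commute)
  ultimately have "(p - q) \<bullet> (p - q) = 0 \<or> (p + q) \<bullet> (p + q) = 0" by auto
  then have "p - q = 0 \<or> p + q = 0" by simp
  moreover have "p - q \<noteq> 0" using assms(3) by simp
  moreover have "p + q \<noteq> 0" using assms(4) by (auto simp: add_eq_0_iff2)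
  ultimately show False by blast
qed

lemma valid_norms: "valid_arc a \<Longrightarrow> norm (fst a) = 1 \<and> norm (snd a) = 1"
  by (simp add: valid_arc_def S2_iff)

lemma valid_cross: "valid_arc a \<Longrightarrow> fst a \<times> snd a \<noteq> 0"
  using cross_unit_nz[of "fst a" "snd a"] valid_norms[of a] unfolding valid_arc_def by simp

lemma seg_0[simp]: "seg a 0 = fst a" and seg_1[simp]: "seg a 1 = snd a"
  by (simp_all add: seg_def)

lemma seg_comb: "seg a ((1 - s) * t1 + s * t2) = (1 - s) *\<^sub>R seg a t1 + s *\<^sub>R seg a t2"
  unfolding seg_def by (simp add: algebra_simps)

lemma seg_cross_q: "seg a t \<times> snd a = (1 - t) *\<^sub>R (fst a \<times> snd a)"
  unfolding seg_def by (simp add: cross_add_left cross_mult_left)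

lemma seg_cross_p: "seg a t \<times> fst a = t *\<^sub>R (snd a \<times> fst a)"
  unfolding seg_def by (simp add: cross_add_left cross_mult_left)

lemma seg_nz: assumes "valid_arc a" shows "seg a t \<noteq> 0"
proof
  assume h: "seg a t = 0"
  then have "(1 - t) *\<^sub>R (fst a \<times> snd a) = 0" using seg_cross_q[of a t] by simp
  then have "t = 1" using valid_cross[OF assms] by simp
  then show False using h assms by (simp add: valid_arc_def S2_iff)
qed

lemma nrm_norm: "v \<noteq> 0 \<Longrightarrow> norm (nrm v) = 1" by (simp add: nrm_def)
lemma nrm_scale: "c > 0 \<Longrightarrow> nrm (c *\<^sub>R v) = nrm v" by (simp add: nrm_def)
lemma nrm_unit: "norm v = 1 \<Longrightarrow> nrm v = v" by (simp add: nrm_def)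
lemma nrm_eq: "nrm v = (1 / norm v) *\<^sub>R v" by (simp add: nrm_def divide_inverse_commute)

lemma endpoint_not_relint:
  assumes "valid_arc a" "0 < t" "t < 1"
  shows "nrm (seg a t) \<noteq> fst a" "nrm (seg a t) \<noteq> snd a"
proof -
  have nz: "seg a t \<noteq> 0" using seg_nz[OF assms(1)] .
  define l where "l = 1 / norm (seg a t)"
  have l: "l > 0" using nz by (simp add: l_def)
  have e: "nrm (seg a t) = l *\<^sub>R seg a t" by (simp add: nrm_eq l_def)
  have c1: "fst a \<times> snd a \<noteq> 0" "snd a \<times> fst a \<noteq> 0" using valid_cross[OF assms(1)]
    by (auto simp: cross_skew[of "snd a"])
  show "nrm (seg a t) \<noteq> fst a"
  proof
    assume "nrm (seg a t) = fst a"
    then have "(l *\<^sub>R seg a t) \<times> fst a = 0" using e by simp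
    then have "(l * t) *\<^sub>R (snd a \<times> fst a) = 0" by (simp add: cross_mult_left seg_cross_p)
    then show False using c1 l assms by simp
  qed
  show "nrm (seg a t) \<noteq> snd a"
  proof
    assume "nrm (seg a t) = snd a"
    then have "(l *\<^sub>R seg a t) \<times> snd a = 0" using e by simp
    then have "(l * (1 - t)) *\<^sub>R (fst a \<times> snd a) = 0" by (simp add: cross_mult_left seg_cross_q)
    then show False using c1 l assms by simp
  qed
qed

lemma path_arc:
  assumes "valid_arc a"
  shows "path (\<lambda>s. nrm (seg a ((1 - s) * t1 + s * t2)))"
proof -
  have "continuous_on {0..1} (\<lambda>s. inverse (norm (seg a ((1 - s) * t1 + s * t2))) *\<^sub>R seg a ((1 - s) * t1 + s * t2))"
    unfolding seg_def using seg_nz[OF assms] unfolding seg_def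
    by (intro continuous_intros) auto
  then show ?thesis unfolding path_def nrm_def by (simp add: divide_inverse_commute)
qed



locale setting =
  fixes D :: "arc set" and A :: "(real^3) set" and f :: "arc \<Rightarrow> real^3" and u0 :: "real^3" and x :: "real^3"
  assumes SD: "spherical_diagram D"
    and poles: "\<And>a. a \<in> D \<Longrightarrow> f a \<in> A \<or> - f a \<in> A"
    and plane: "\<And>a. a \<in> D \<Longrightarrow> \<exists>u. u \<noteq> 0 \<and> inner u (f a) = 0 \<and> (\<forall>z\<in>arc_set a. inner u z = 0)"
    and notin: "\<And>a. a \<in> D \<Longrightarrow> f a \<notin> arc_set a \<and> - f a \<notin> arc_set a"
    and finA: "finite A" and neA: "A \<noteq> {}" and AS2: "A \<subseteq> S2"
    and u0A: "\<And>a. a \<in> A \<Longrightarrow> inner u0 a > 0"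
    and x_int: "x \<in> sph_interior (sph_hull A)"
    and x_U: "x \<in> \<Union>(arc_set ` D)"
begin

definition K where "K = convex_cone hull A"
definition H where "H = sph_hull A"
definition U where "U = \<Union>(arc_set ` D)"
definition m0 where "m0 = Min ((\<lambda>a. inner u0 a) ` A)"

lemma finD: "finite D" using SD by (simp add: spherical_diagram_def)
lemma validD: "a \<in> D \<Longrightarrow> valid_arc a" using SD by (simp add: spherical_diagram_def)

lemma H_eq: "H = S2 \<inter> K"
proof -
  have "\<exists>u. \<forall>a\<in>A. inner u a > 0" using u0A by blast
  then have "H = S2 \<inter> {c *\<^sub>R v | c v. c \<ge> 0 \<and> v \<in> convex hull A}" by (simp add: H_def sph_hull_def)
  also have "{c *\<^sub>R v | c v. c \<ge> 0 \<and> v \<in> convex hull A} = K"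
    unfolding K_def convex_cone_hull_convex_hull_nonempty[OF neA] by auto
  finally show ?thesis .
qed

lemma K_convex: "convex K" by (simp add: K_def convex_convex_cone_hull)
lemma K_add: "v \<in> K \<Longrightarrow> w \<in> K \<Longrightarrow> v + w \<in> K" by (simp add: K_def convex_cone_hull_add)
lemma K_mul: "v \<in> K \<Longrightarrow> 0 \<le> c \<Longrightarrow> c *\<^sub>R v \<in> K" by (simp add: K_def convex_cone_hull_mul)
lemma K_0: "0 \<in> K" by (simp add: K_def convex_cone_hull_contains_0)
lemma K_closed: "closed K" by (simp add: K_def closed_convex_cone_hull finA)
lemma A_K: "A \<subseteq> K" by (simp add: K_def hull_subset)

lemma m0_pos: "m0 > 0"
  unfolding m0_def using finA neA u0A by (subst Min_gr_iff) auto

lemma K_u0: assumes "v \<in> K" shows "inner u0 v \<ge> m0 * norm v"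
proof -
  have "{w. m0 \<le> inner u0 w \<and> norm w \<le> 1} = {w. inner u0 w \<ge> m0} \<inter> cball 0 1" by auto
  then have cv: "convex {w. m0 \<le> inner u0 w \<and> norm w \<le> 1}"
    by (simp add: convex_Int convex_halfspace_ge convex_cball)
  have "A \<subseteq> {w. m0 \<le> inner u0 w \<and> norm w \<le> 1}"
    using AS2 finA unfolding m0_def by (auto simp: S2_iff)
  then have hA: "convex hull A \<subseteq> {w. m0 \<le> inner u0 w \<and> norm w \<le> 1}"
    by (rule hull_minimal) (use cv in auto)
  obtain c w where cw: "v = c *\<^sub>R w" "c \<ge> 0" "w \<in> convex hull A"
    using assms unfolding K_def convex_cone_hull_convex_hull_nonempty[OF neA] by auto
  have w1: "m0 \<le> inner u0 w" "norm w \<le> 1" using hA cw(3) by auto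
  have "m0 * norm v = c * (m0 * norm w)" using cw(2) by (simp add: cw(1))
  also have "\<dots> \<le> c * m0" using w1 m0_pos cw(2) by (intro mult_left_mono) (simp_all add: mult_left_le)
  also have "\<dots> \<le> c * inner u0 w" using w1 cw(2) by (simp add: mult_left_mono)
  also have "\<dots> = inner u0 v" by (simp add: cw(1))
  finally show ?thesis .
qed

lemma K_u0_pos: "v \<in> K \<Longrightarrow> v \<noteq> 0 \<Longrightarrow> inner u0 v > 0"
  using K_u0[of v] m0_pos by (smt (verit) mult_pos_pos zero_less_norm_iff)

lemma Kint_add: assumes "v \<in> interior K" "w \<in> K" shows "v + w \<in> interior K"
proof -
  obtain e where e: "e > 0" "ball v e \<subseteq> K" using assms(1) by (auto simp: mem_interior)
  have "ball (v + w) e \<subseteq> K"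
  proof
    fix z assume "z \<in> ball (v + w) e"
    then have "z - w \<in> ball v e" by (simp add: dist_norm algebra_simps)
    then have "z - w \<in> K" using e by auto
    then have "(z - w) + w \<in> K" using K_add assms(2) by blast
    then show "z \<in> K" by simp
  qed
  then show ?thesis using e by (auto simp: mem_interior)
qed

lemma Kint_mul: assumes "v \<in> interior K" "c > 0" shows "c *\<^sub>R v \<in> interior K"
proof -
  obtain e where e: "e > 0" "ball v e \<subseteq> K" using assms(1) by (auto simp: mem_interior)
  have "ball (c *\<^sub>R v) (c * e) \<subseteq> K"
  proof
    fix z assume "z \<in> ball (c *\<^sub>R v) (c * e)"
    then have "dist (c *\<^sub>R v) z < c * e" by simp
    moreover have "dist (c *\<^sub>R v) z = c * dist v ((1/c) *\<^sub>R z)"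
    proof -
      have "c *\<^sub>R v - z = c *\<^sub>R (v - (1/c) *\<^sub>R z)" using assms(2) by (simp add: algebra_simps)
      then show ?thesis using assms(2) by (simp add: dist_norm)
    qed
    ultimately have "(1/c) *\<^sub>R z \<in> ball v e" using assms(2) by simp
    then have "(1/c) *\<^sub>R z \<in> K" using e by auto
    then have "c *\<^sub>R ((1/c) *\<^sub>R z) \<in> K" using K_mul[OF _ less_imp_le[OF assms(2)]] by blast
    then show "z \<in> K" using assms(2) by simp
  qed
  then show ?thesis using e assms(2) unfolding mem_interior by (metis mult_pos_pos)
qed

lemma Kint_seg: assumes "v \<in> interior K" "w \<in> K" "0 \<le> \<theta>" "\<theta> < 1"
  shows "(1 - \<theta>) *\<^sub>R v + \<theta> *\<^sub>R w \<in> interior K"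
  using Kint_add[OF Kint_mul[OF assms(1)] K_mul[OF assms(2,3)]] assms(4) by simp

lemma nrm_K: "v \<noteq> 0 \<Longrightarrow> nrm v \<in> K \<longleftrightarrow> v \<in> K"
proof -
  assume v: "v \<noteq> 0"
  have "nrm v = (1 / norm v) *\<^sub>R v" by (rule nrm_eq)
  moreover have "v = norm v *\<^sub>R nrm v" using v by (simp add: nrm_def)
  ultimately show ?thesis using K_mul v by (metis divide_nonneg_nonneg norm_ge_zero zero_le_one)
qed

lemma nrm_Kint: "v \<noteq> 0 \<Longrightarrow> nrm v \<in> interior K \<longleftrightarrow> v \<in> interior K"
proof -
  assume v: "v \<noteq> 0"
  have "nrm v = (1 / norm v) *\<^sub>R v" by (rule nrm_eq)
  moreover have "v = norm v *\<^sub>R nrm v" using v by (simp add: nrm_def)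
  ultimately show ?thesis using Kint_mul v by (metis divide_pos_pos zero_less_norm_iff zero_less_one)
qed

lemma H_iff: "v \<noteq> 0 \<Longrightarrow> nrm v \<in> H \<longleftrightarrow> v \<in> K"
  using nrm_K nrm_norm by (simp add: H_eq S2_iff)

lemma sphint_S2: assumes "z \<in> S2" shows "z \<in> sph_interior H \<longleftrightarrow> z \<in> interior K"
proof
  assume "z \<in> interior K"
  then obtain e where e: "e > 0" "ball z e \<subseteq> K" by (auto simp: mem_interior)
  have "z \<in> H" using e assms by (auto simp: H_eq)
  moreover have "\<forall>z'\<in>S2. dist z' z < e \<longrightarrow> z' \<in> H" using e by (auto simp: H_eq dist_commute)
  ultimately show "z \<in> sph_interior H" using e unfolding sph_interior_def by blast
next
  assume "z \<in> sph_interior H"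
  then obtain e where e: "e > 0" "\<forall>z'\<in>S2. dist z' z < e \<longrightarrow> z' \<in> H"
    unfolding sph_interior_def by blast
  have nz: "norm z = 1" using assms by (simp add: S2_iff)
  define r where "r = min e 1 / 2"
  have r: "r > 0" "2 * r \<le> e" "r < 1" using e by (auto simp: r_def)
  have "ball z r \<subseteq> K"
  proof
    fix w assume "w \<in> ball z r"
    then have dw: "norm (w - z) < r" by (simp add: dist_norm norm_minus_commute)
    have "\<bar>norm w - norm z\<bar> \<le> norm (w - z)" by (rule norm_triangle_ineq3)
    then have nw: "\<bar>norm w - 1\<bar> < r" using dw nz by simp
    then have wnz: "w \<noteq> 0" using r by auto
    have "nrm w - w = (1 / norm w - 1) *\<^sub>R w" by (simp add: nrm_eq algebra_simps)
    then have "norm (nrm w - w) = \<bar>1 / norm w - 1\<bar> * norm w" by simp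
    also have "\<dots> = \<bar>1 - norm w\<bar>" using wnz by (simp add: abs_mult_pos' [symmetric] algebra_simps
          flip: abs_mult) (simp add: field_simps)
    finally have "norm (nrm w - w) < r" using nw by (simp add: abs_minus_commute)
    then have "norm (nrm w - z) < 2 * r"
      using dw norm_triangle_ineq[of "nrm w - w" "w - z"] by simp
    then have "dist (nrm w) z < e" using r by (simp add: dist_norm)
    moreover have "nrm w \<in> S2" using wnz nrm_norm by (simp add: S2_iff)
    ultimately have "nrm w \<in> H" using e by blast
    then show "w \<in> K" using H_iff wnz by blast
  qed
  then show "z \<in> interior K" using r by (auto simp: mem_interior)
qed

lemma Hint_iff: "v \<noteq> 0 \<Longrightarrow> nrm v \<in> sph_interior H \<longleftrightarrow> v \<in> interior K"
  using sphint_S2[of "nrm v"] nrm_Kint nrm_norm by (simp add: S2_iff)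

end


context setting begin

definition reach :: "real^3 \<Rightarrow> bool" where
  "reach z \<longleftrightarrow> (\<exists>g. path g \<and> pathstart g = x \<and> pathfinish g = z \<and> path_image g \<subseteq> U \<and> path_image g \<subseteq> sph_interior H)"

lemma seg_in_arc: "t \<in> {0..1} \<Longrightarrow> nrm (seg a t) \<in> arc_set a"
  by (simp add: arc_set_eq)

lemma arc_path:
  assumes a: "a \<in> D" and t: "t1 \<in> {0..1}" "t2 \<in> {0..1}"
  shows "\<exists>g. path g \<and> pathstart g = nrm (seg a t1) \<and> pathfinish g = nrm (seg a t2) \<and> path_image g \<subseteq> U
     \<and> (seg a t1 \<in> interior K \<longrightarrow> seg a t2 \<in> K \<longrightarrow> (\<forall>s\<in>{0..<1}. g s \<in> sph_interior H))"
proof -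
  define g where "g = (\<lambda>s. nrm (seg a ((1 - s) * t1 + s * t2)))"
  have va: "valid_arc a" using validD a .
  have p: "path g" unfolding g_def by (rule path_arc[OF va])
  have cvx: "s \<in> {0..1} \<Longrightarrow> (1 - s) * t1 + s * t2 \<in> {0..1}" for s
  proof -
    assume s: "s \<in> {0..1}"
    have "0 \<le> (1 - s) * t1" "0 \<le> s * t2" using s t by auto
    moreover have "(1 - s) * t1 \<le> (1 - s)" "s * t2 \<le> s" using s t by (auto simp: mult_left_le)
    ultimately show ?thesis by auto
  qed
  have img: "path_image g \<subseteq> U"
    unfolding path_image_def g_def U_def using cvx seg_in_arc a by blast
  have int: "\<forall>s\<in>{0..<1}. g s \<in> sph_interior H" if "seg a t1 \<in> interior K" "seg a t2 \<in> K"
  proof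
    fix s :: real assume s: "s \<in> {0..<1}"
    have "seg a ((1 - s) * t1 + s * t2) = (1 - s) *\<^sub>R seg a t1 + s *\<^sub>R seg a t2" by (rule seg_comb)
    also have "\<dots> \<in> interior K" using Kint_seg[OF that] s by auto
    finally show "g s \<in> sph_interior H" unfolding g_def using Hint_iff seg_nz[OF va] by blast
  qed
  show ?thesis using p img int by (intro exI[of _ g]) (auto simp: g_def pathstart_def pathfinish_def)
qed

lemma reach_x: "reach x"
proof -
  have "path (\<lambda>t. x)" by (simp add: path_def)
  moreover have "path_image (\<lambda>t. x) = {x}" by (auto simp: path_image_def)
  ultimately show ?thesis unfolding reach_def using x_U x_int
    by (intro exI[of _ "\<lambda>t. x"]) (auto simp: pathstart_def pathfinish_def U_def H_def)
qed

lemma reach_ext: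
  assumes a: "a \<in> D" and t: "t1 \<in> {0..1}" "t2 \<in> {0..1}"
    and r: "reach (nrm (seg a t1))" and i1: "seg a t1 \<in> interior K" and i2: "seg a t2 \<in> interior K"
  shows "reach (nrm (seg a t2))"
proof -
  obtain g where g: "path g" "pathstart g = x" "pathfinish g = nrm (seg a t1)" "path_image g \<subseteq> U"
    "path_image g \<subseteq> sph_interior H" using r unfolding reach_def by blast
  obtain h where h: "path h" "pathstart h = nrm (seg a t1)" "pathfinish h = nrm (seg a t2)" "path_image h \<subseteq> U"
    "\<forall>s\<in>{0..<1}. h s \<in> sph_interior H" using arc_path[OF a t] i1 i2 interior_subset by blast
  have va: "valid_arc a" using validD a .
  have "path_image h \<subseteq> sph_interior H"
  proof
    fix z assume "z \<in> path_image h"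
    then obtain s where s: "s \<in> {0..1}" "z = h s" by (auto simp: path_image_def)
    show "z \<in> sph_interior H"
    proof (cases "s = 1")
      case True
      then have "z = nrm (seg a t2)" using h(3) s by (simp add: pathfinish_def)
      then show ?thesis using Hint_iff seg_nz[OF va] i2 by blast
    next
      case False then show ?thesis using h(5) s by auto
    qed
  qed
  then show ?thesis unfolding reach_def using g h
    by (intro exI[of _ "g +++ h"]) (auto simp: path_image_join)
qed

lemma reach_conn:
  assumes a: "a \<in> D" and t: "t1 \<in> {0..1}" "t2 \<in> {0..1}"
    and r: "reach (nrm (seg a t1))" and i1: "seg a t1 \<in> interior K" and i2: "seg a t2 \<in> K"
  shows "int_connected D H x (nrm (seg a t2))"
proof -
  obtain g where g: "path g" "pathstart g = x" "pathfinish g = nrm (seg a t1)" "path_image g \<subseteq> U"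
    "path_image g \<subseteq> sph_interior H" using r unfolding reach_def by blast
  obtain h where h: "path h" "pathstart h = nrm (seg a t1)" "pathfinish h = nrm (seg a t2)" "path_image h \<subseteq> U"
    "\<forall>s\<in>{0..<1}. h s \<in> sph_interior H" using arc_path[OF a t] i1 i2 by blast
  have "\<forall>t\<in>{0<..<1}. (g +++ h) t \<in> sph_interior H"
  proof
    fix t :: real assume t: "t \<in> {0<..<1}"
    show "(g +++ h) t \<in> sph_interior H"
    proof (cases "t \<le> 1/2")
      case True
      then have "g (2 * t) \<in> path_image g" using t by (auto simp: path_image_def)
      then show ?thesis using True g(5) by (auto simp: joinpaths_def)
    next
      case False
      then show ?thesis using t h(5) by (auto simp: joinpaths_def)
    qed
  qed
  then show ?thesis unfolding int_connected_def using g h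
    by (intro exI[of _ "g +++ h"]) (auto simp: path_image_join U_def)
qed

definition psi :: "real^3 \<Rightarrow> real^3 \<Rightarrow> real" where "psi w v = inner w v / inner u0 v"
definition dd :: "arc \<Rightarrow> real^3" where "dd a = inner u0 (fst a) *\<^sub>R snd a - inner u0 (snd a) *\<^sub>R fst a"

lemma psi_nrm: "v \<noteq> 0 \<Longrightarrow> psi w (nrm v) = psi w v"
  by (simp add: psi_def nrm_eq)

lemma psi_lin: "psi w v = inner w ((1 / inner u0 v) *\<^sub>R v)"
  by (simp add: psi_def)

lemma psi_key: "inner w (seg a t) * inner u0 (seg a s) - inner w (seg a s) * inner u0 (seg a t) = (t - s) * inner w (dd a)"
  unfolding seg_def dd_def by (simp add: inner_add_right inner_diff_right algebra_simps)

lemma psi_mono: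
  assumes "inner u0 (seg a s) > 0" "inner u0 (seg a t) > 0" "s < t"
  shows "inner w (dd a) > 0 \<Longrightarrow> psi w (seg a s) < psi w (seg a t)"
    and "inner w (dd a) < 0 \<Longrightarrow> psi w (seg a t) < psi w (seg a s)"
proof -
  have k: "inner w (seg a t) * inner u0 (seg a s) - inner w (seg a s) * inner u0 (seg a t) = (t - s) * inner w (dd a)"
    by (rule psi_key)
  show "inner w (dd a) > 0 \<Longrightarrow> psi w (seg a s) < psi w (seg a t)"
  proof -
    assume "inner w (dd a) > 0"
    then have "(t - s) * inner w (dd a) > 0" using assms(3) by simp
    then show ?thesis using k assms(1,2) unfolding psi_def by (simp add: divide_less_eq less_divide_eq field_simps)
  qed
  show "inner w (dd a) < 0 \<Longrightarrow> psi w (seg a t) < psi w (seg a s)"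
  proof -
    assume "inner w (dd a) < 0"
    then have "(t - s) * inner w (dd a) < 0" using assms(3) by (simp add: mult_pos_neg)
    then show ?thesis using k assms(1,2) unfolding psi_def by (simp add: divide_less_eq less_divide_eq field_simps)
  qed
qed

lemma dd_nz: assumes a: "a \<in> D" and "seg a t \<in> K" shows "dd a \<noteq> 0"
proof
  assume h: "dd a = 0"
  have va: "valid_arc a" using validD a .
  have c: "fst a \<times> snd a \<noteq> 0" "snd a \<times> fst a \<noteq> 0" using valid_cross[OF va] by (auto simp: cross_skew[of "snd a"])
  have e: "inner u0 (fst a) *\<^sub>R snd a = inner u0 (snd a) *\<^sub>R fst a" using h by (simp add: dd_def)
  have "(inner u0 (fst a) *\<^sub>R snd a) \<times> fst a = (inner u0 (snd a) *\<^sub>R fst a) \<times> fst a" using e by simp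
  then have "inner u0 (fst a) *\<^sub>R (snd a \<times> fst a) = 0" by (simp add: cross_mult_left)
  then have 1: "inner u0 (fst a) = 0" using c by simp
  have "(inner u0 (fst a) *\<^sub>R snd a) \<times> snd a = (inner u0 (snd a) *\<^sub>R fst a) \<times> snd a" using e by simp
  then have "inner u0 (snd a) *\<^sub>R (fst a \<times> snd a) = 0" by (simp add: cross_mult_left)
  then have 2: "inner u0 (snd a) = 0" using c by simp
  have "inner u0 (seg a t) = 0" using 1 2 by (simp add: seg_def inner_add_right)
  moreover have "inner u0 (seg a t) > 0" using K_u0_pos assms(2) seg_nz[OF va] by blast
  ultimately show False by simp
qed

lemma generic_exists:
  assumes "open Ob" "Ob \<noteq> {}"
  shows "\<exists>w\<in>Ob. \<forall>a\<in>D. dd a \<noteq> 0 \<longrightarrow> inner w (dd a) \<noteq> 0"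
proof (rule ccontr)
  assume "\<not> ?thesis"
  then have sub: "Ob \<subseteq> \<Union>((\<lambda>a. {w. inner (dd a) w = 0}) ` {a\<in>D. dd a \<noteq> 0})"
    by (auto simp: inner_commute)
  have "negligible (\<Union>((\<lambda>a. {w. inner (dd a) w = 0}) ` {a\<in>D. dd a \<noteq> 0}))"
    using finD by (intro negligible_Union) (auto intro!: negligible_hyperplane)
  then have "negligible Ob" using sub negligible_subset by blast
  then show False using open_not_negligible assms by blast
qed

lemma near_int:
  assumes a: "a \<in> D" and i: "seg a t \<in> interior K"
  shows "\<exists>\<delta>>0. \<forall>t'. \<bar>t' - t\<bar> < \<delta> \<longrightarrow> seg a t' \<in> interior K"
proof -
  obtain e where e: "e > 0" "ball (seg a t) e \<subseteq> interior K"
    using i open_contains_ball open_interior by blast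
  define \<delta> where "\<delta> = e / (norm (snd a - fst a) + 1)"
  have np: "norm (snd a - fst a) + 1 > 0" using norm_ge_zero[of "snd a - fst a"] by linarith
  have dpos: "\<delta> > 0" using e np by (simp add: \<delta>_def)
  have "seg a t' \<in> interior K" if "\<bar>t' - t\<bar> < \<delta>" for t'
  proof -
    have "seg a t' - seg a t = (t' - t) *\<^sub>R (snd a - fst a)" by (simp add: seg_def algebra_simps)
    then have "dist (seg a t) (seg a t') = norm ((t' - t) *\<^sub>R (snd a - fst a))"
      by (metis dist_commute dist_norm)
    also have "\<dots> = \<bar>t' - t\<bar> * norm (snd a - fst a)" by simp
    also have "\<dots> \<le> \<bar>t' - t\<bar> * (norm (snd a - fst a) + 1)" by (simp add: mult_left_mono)
    also have "\<dots> < \<delta> * (norm (snd a - fst a) + 1)"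
      using that np by (intro mult_strict_right_mono) auto
    also have "\<dots> = e" using np by (simp add: \<delta>_def)
    finally show ?thesis using e by auto
  qed
  then show ?thesis using dpos by blast
qed

lemma other_int:
  assumes a: "a \<in> D" and t: "t \<in> {0..1}" and i: "seg a t \<in> interior K"
  shows "\<exists>t'\<in>{0..1}. t' \<noteq> t \<and> seg a t' \<in> interior K"
proof -
  obtain \<delta> where d: "\<delta> > 0" "\<forall>t'. \<bar>t' - t\<bar> < \<delta> \<longrightarrow> seg a t' \<in> interior K" using near_int[OF a i] by blast
  show ?thesis
  proof (cases "t \<le> 1/2")
    case True
    define t' where "t' = t + min (\<delta>/2) (1/2)"
    have "t' \<in> {0..1}" "t' \<noteq> t" "\<bar>t' - t\<bar> < \<delta>" using True t d(1) by (auto simp: t'_def)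
    then show ?thesis using d(2) by blast
  next
    case False
    define t' where "t' = t - min (\<delta>/2) (1/2)"
    have "t' \<in> {0..1}" "t' \<noteq> t" "\<bar>t' - t\<bar> < \<delta>" using False t d(1) by (auto simp: t'_def)
    then show ?thesis using d(2) by blast
  qed
qed

lemma better_int:
  assumes a: "a \<in> D" and t: "t \<in> {0<..<1}" and i: "seg a t \<in> interior K" and w: "inner w (dd a) \<noteq> 0"
  shows "\<exists>t'\<in>{0..1}. seg a t' \<in> interior K \<and> psi w (seg a t) < psi w (seg a t')"
proof -
  have va: "valid_arc a" using validD a .
  obtain \<delta> where d: "\<delta> > 0" "\<forall>t'. \<bar>t' - t\<bar> < \<delta> \<longrightarrow> seg a t' \<in> interior K" using near_int[OF a i] by blast
  have pos: "inner u0 (seg a s) > 0" if "seg a s \<in> interior K" for s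
    using K_u0_pos seg_nz[OF va] interior_subset that by blast
  show ?thesis
  proof (cases "inner w (dd a) > 0")
    case True
    define t' where "t' = t + min (\<delta>/2) ((1 - t)/2)"
    have t': "t' \<in> {0..1}" "t < t'" "\<bar>t' - t\<bar> < \<delta>" using t d(1) unfolding t'_def min_def by (auto simp: field_simps)
    then have i': "seg a t' \<in> interior K" using d(2) by blast
    have "psi w (seg a t) < psi w (seg a t')" using psi_mono(1)[OF pos[OF i] pos[OF i'] t'(2) True] .
    then show ?thesis using t' i' by blast
  next
    case False
    then have neg: "inner w (dd a) < 0" using w by simp
    define t' where "t' = t - min (\<delta>/2) (t/2)"
    have t': "t' \<in> {0..1}" "t' < t" "\<bar>t' - t\<bar> < \<delta>" using t d(1) unfolding t'_def min_def by (auto simp: field_simps)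
    then have i': "seg a t' \<in> interior K" using d(2) by blast
    have "psi w (seg a t) < psi w (seg a t')" using psi_mono(2)[OF pos[OF i'] pos[OF i] t'(2) neg] .
    then show ?thesis using t' i' by blast
  qed
qed

lemma thrust_of:
  assumes a: "a \<in> D" and t: "t \<in> {0..1}" "t0 \<in> {0..1}" and k: "seg a t \<in> K" "seg a t \<notin> interior K"
    and i: "seg a t0 \<in> interior K"
  shows "thrusts a H (nrm (seg a t))"
proof -
  have va: "valid_arc a" using validD a .
  have "nrm (seg a t) \<in> H" using H_iff seg_nz[OF va] k(1) by blast
  moreover have "nrm (seg a t) \<notin> sph_interior H" using Hint_iff seg_nz[OF va] k(2) by blast
  moreover have "nrm (seg a t0) \<in> sph_interior H" using Hint_iff seg_nz[OF va] i by blast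
  ultimately show ?thesis unfolding thrusts_def sph_boundary_def
    using seg_in_arc t closure_subset by blast
qed

end


context setting begin

lemma cone2:
  assumes vz: "vz \<in> interior K" and c: "c \<in> K" and ez: "vz = \<mu> *\<^sub>R v1 + \<nu> *\<^sub>R v2" and ec: "c = \<alpha> *\<^sub>R v1 + \<beta> *\<^sub>R v2"
    and "\<mu> > 0" "\<nu> > 0" "\<alpha> < 0" "\<beta> \<ge> 0"
  shows "v2 \<in> interior K"
proof -
  define \<kappa> where "\<kappa> = \<mu> / (- \<alpha>)"
  have "- \<alpha> > 0" using assms by simp
  then have kp: "\<kappa> > 0" using assms unfolding \<kappa>_def by (intro divide_pos_pos) auto
  have ka: "\<kappa> * \<alpha> = - \<mu>" using assms by (simp add: \<kappa>_def)
  define \<rho> where "\<rho> = \<nu> + \<kappa> * \<beta>"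
  have rp: "\<rho> > 0" using assms kp by (simp add: \<rho>_def add_pos_nonneg)
  have "vz + \<kappa> *\<^sub>R c = (\<mu> + \<kappa> * \<alpha>) *\<^sub>R v1 + (\<nu> + \<kappa> * \<beta>) *\<^sub>R v2"
    unfolding ez ec by (simp add: algebra_simps)
  also have "\<dots> = \<rho> *\<^sub>R v2" using ka by (simp add: \<rho>_def)
  finally have e: "vz + \<kappa> *\<^sub>R c = \<rho> *\<^sub>R v2" .
  have "vz + \<kappa> *\<^sub>R c \<in> interior K" using Kint_add[OF vz K_mul[OF c]] kp by simp
  then have "(1 / \<rho>) *\<^sub>R (vz + \<kappa> *\<^sub>R c) \<in> interior K" using Kint_mul rp by simp
  then show ?thesis using e rp by simp
qed

lemma TT_lt:
  assumes a: "a \<in> D" and t: "t1 \<in> {0..1}" "t2 \<in> {0..1}" "tz \<in> {0..1}" and lt: "t1 < t2"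
    and k1: "seg a t1 \<in> K" "seg a t1 \<notin> interior K" and k2: "seg a t2 \<in> K" "seg a t2 \<notin> interior K"
    and iz: "seg a tz \<in> interior K"
  shows False
proof -
  have va: "valid_arc a" using validD a .
  have kz: "seg a tz \<in> K" using iz interior_subset by blast
  have "tz \<noteq> t1" "tz \<noteq> t2" using k1 k2 iz by auto
  have b1: "\<not> tz < t1"
  proof
    assume h: "tz < t1"
    define \<theta> where "\<theta> = (t1 - tz) / (t2 - tz)"
    have th: "0 \<le> \<theta>" "\<theta> < 1" using h lt by (auto simp: \<theta>_def)
    have "\<theta> * (t2 - tz) = t1 - tz" using h lt by (simp add: \<theta>_def)
    moreover have "(1 - \<theta>) * tz + \<theta> * t2 = tz + \<theta> * (t2 - tz)" by (simp add: algebra_simps)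
    ultimately have "(1 - \<theta>) * tz + \<theta> * t2 = t1" by simp
    then have "seg a t1 = (1 - \<theta>) *\<^sub>R seg a tz + \<theta> *\<^sub>R seg a t2" using seg_comb[of a \<theta> tz t2] by simp
    then show False using Kint_seg[OF iz k2(1) th] k1 by simp
  qed
  have b2: "\<not> tz > t2"
  proof
    assume h: "tz > t2"
    define \<theta> where "\<theta> = (tz - t2) / (tz - t1)"
    have th: "0 \<le> \<theta>" "\<theta> < 1" using h lt by (auto simp: \<theta>_def)
    have "\<theta> * (tz - t1) = tz - t2" using h lt by (simp add: \<theta>_def)
    moreover have "(1 - \<theta>) * tz + \<theta> * t1 = tz - \<theta> * (tz - t1)" by (simp add: algebra_simps)
    ultimately have "(1 - \<theta>) * tz + \<theta> * t1 = t2" by simp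
    then have "seg a t2 = (1 - \<theta>) *\<^sub>R seg a tz + \<theta> *\<^sub>R seg a t1" using seg_comb[of a \<theta> tz t1] by simp
    then show False using Kint_seg[OF iz k1(1) th] k2 by simp
  qed
  have btw: "t1 < tz" "tz < t2" using b1 b2 \<open>tz \<noteq> t1\<close> \<open>tz \<noteq> t2\<close> by auto
  obtain c where c: "c \<in> A" "c = f a \<or> c = - f a" using poles[OF a] by blast
  obtain u where u: "u \<noteq> 0" "inner u (f a) = 0" "\<forall>z\<in>arc_set a. inner u z = 0" using plane[OF a] by blast
  have pin: "fst a \<in> arc_set a" "snd a \<in> arc_set a"
    using seg_in_arc[of 0 a] seg_in_arc[of 1 a] valid_norms[OF va] by (auto simp: nrm_unit)
  have uc: "inner u c = 0" using c(2) u(2) by auto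
  have "(fst a \<times> snd a) \<bullet> c = 0" using det_zero[OF u(1) _ _ uc] u(3) pin by blast
  then obtain \<alpha>' \<beta>' where cab: "c = \<alpha>' *\<^sub>R fst a + \<beta>' *\<^sub>R snd a" using in_span2 valid_cross[OF va] by blast
  define v1 where "v1 = seg a t1"
  define v2 where "v2 = seg a t2"
  define vz where "vz = seg a tz"
  define \<alpha> where "\<alpha> = (\<alpha>' * t2 - \<beta>' * (1 - t2)) / (t2 - t1)"
  define \<beta> where "\<beta> = (\<beta>' * (1 - t1) - \<alpha>' * t1) / (t2 - t1)"
  have "(t2 - t1) *\<^sub>R c = (\<alpha>' * t2 - \<beta>' * (1 - t2)) *\<^sub>R v1 + (\<beta>' * (1 - t1) - \<alpha>' * t1) *\<^sub>R v2"
    unfolding cab v1_def v2_def seg_def by (simp add: algebra_simps)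
  then have cv: "c = \<alpha> *\<^sub>R v1 + \<beta> *\<^sub>R v2" using lt
    by (simp add: \<alpha>_def \<beta>_def divide_inverse_commute scaleR_add_right[symmetric] flip: scaleR_scaleR)
      (metis (no_types, lifting) diff_gt_0_iff_gt less_irrefl scaleR_cancel_left scaleR_scaleR
        right_inverse scaleR_one mult.commute)
  define \<mu> where "\<mu> = (t2 - tz) / (t2 - t1)"
  define \<nu> where "\<nu> = (tz - t1) / (t2 - t1)"
  have mn: "\<mu> > 0" "\<nu> > 0" using btw lt by (auto simp: \<mu>_def \<nu>_def)
  have "\<mu> + \<nu> = ((t2 - tz) + (tz - t1)) / (t2 - t1)" unfolding \<mu>_def \<nu>_def by (rule add_divide_distrib[symmetric])
  then have s1: "1 - \<nu> = \<mu>" using lt by simp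
  have "\<nu> * (t2 - t1) = tz - t1" using lt by (simp add: \<nu>_def)
  moreover have "(1 - \<nu>) * t1 + \<nu> * t2 = t1 + \<nu> * (t2 - t1)" by (simp add: algebra_simps)
  ultimately have "(1 - \<nu>) * t1 + \<nu> * t2 = tz" "1 - \<nu> = \<mu>" using s1 by simp_all
  then have zv: "vz = \<mu> *\<^sub>R v1 + \<nu> *\<^sub>R v2" using seg_comb[of a \<nu> t1 t2] by (simp add: vz_def v1_def v2_def)
  have cK: "c \<in> K" using A_K c(1) by blast
  have cn: "c \<noteq> 0" using c(1) AS2 by (auto simp: S2_iff)
  have p1: "inner u0 v1 > 0" "inner u0 v2 > 0" using K_u0_pos seg_nz[OF va] k1 k2 by (auto simp: v1_def v2_def)
  have pc: "inner u0 c > 0" using K_u0_pos cK cn by blast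
  have vzi: "vz \<in> interior K" using iz by (simp add: vz_def)
  show False
  proof (cases "\<alpha> \<ge> 0 \<and> \<beta> \<ge> 0")
    case True
    have abp: "\<alpha> + \<beta> > 0"
    proof (rule ccontr)
      assume "\<not> \<alpha> + \<beta> > 0"
      then have "\<alpha> = 0" "\<beta> = 0" using True by auto
      then show False using cv cn by simp
    qed
    define \<theta> where "\<theta> = \<beta> / (\<alpha> + \<beta>)"
    have th: "0 \<le> \<theta>" "\<theta> \<le> 1" using True abp by (auto simp: \<theta>_def)
    have th1: "1 - \<theta> = \<alpha> / (\<alpha> + \<beta>)" using abp by (simp add: \<theta>_def field_simps)
    define \<tau> where "\<tau> = (1 - \<theta>) * t1 + \<theta> * t2"
    have tau: "\<tau> \<in> {0..1}"
    proof -
      have "0 \<le> (1 - \<theta>) * t1" "0 \<le> \<theta> * t2" using th t by auto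
      moreover have "(1 - \<theta>) * t1 \<le> 1 - \<theta>" "\<theta> * t2 \<le> \<theta>" using th t by (auto simp: mult_left_le)
      ultimately show ?thesis by (auto simp: \<tau>_def)
    qed
    have "seg a \<tau> = (1 - \<theta>) *\<^sub>R v1 + \<theta> *\<^sub>R v2" by (simp add: \<tau>_def seg_comb v1_def v2_def)
    also have "\<dots> = (\<alpha> / (\<alpha> + \<beta>)) *\<^sub>R v1 + (\<beta> / (\<alpha> + \<beta>)) *\<^sub>R v2" unfolding th1 by (simp add: \<theta>_def)
    also have "\<dots> = (1 / (\<alpha> + \<beta>)) *\<^sub>R c" unfolding cv by (simp add: scaleR_add_right)
    finally have e: "seg a \<tau> = (1 / (\<alpha> + \<beta>)) *\<^sub>R c" .
    have "c = (\<alpha> + \<beta>) *\<^sub>R seg a \<tau>" using abp by (simp add: e)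
    then have "nrm c = nrm (seg a \<tau>)" using nrm_scale abp by simp
    moreover have "nrm c = c" using c(1) AS2 by (auto simp: S2_iff nrm_unit)
    ultimately have "c \<in> arc_set a" using seg_in_arc[OF tau] by simp
    then show False using c(2) notin[OF a] by auto
  next
    case False
    then consider "\<alpha> < 0" "\<beta> < 0" | "\<alpha> < 0" "\<beta> \<ge> 0" | "\<alpha> \<ge> 0" "\<beta> < 0" by linarith
    then show False
    proof cases
      case 1
      have "inner u0 c = \<alpha> * inner u0 v1 + \<beta> * inner u0 v2" by (simp add: cv inner_add_right)
      also have "\<dots> < 0" using 1 p1 by (simp add: add_neg_neg mult_neg_pos)
      finally show False using pc by simp
    next
      case 2
      have "v2 \<in> interior K" using cone2[OF vzi cK zv cv mn 2] .
      then show False using k2 by (simp add: v2_def)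
    next
      case 3
      have z2: "vz = \<nu> *\<^sub>R v2 + \<mu> *\<^sub>R v1" using zv by (simp add: add.commute)
      have c2: "c = \<beta> *\<^sub>R v2 + \<alpha> *\<^sub>R v1" using cv by (simp add: add.commute)
      have "v1 \<in> interior K" using cone2[OF vzi cK z2 c2 mn(2) mn(1) 3(2) 3(1)] .
      then show False using k1 by (simp add: v1_def)
    qed
  qed
qed

lemma TT:
  assumes a: "a \<in> D" and t: "t1 \<in> {0..1}" "t2 \<in> {0..1}" "tz \<in> {0..1}" and ne: "t1 \<noteq> t2"
    and k1: "seg a t1 \<in> K" "seg a t1 \<notin> interior K" and k2: "seg a t2 \<in> K" "seg a t2 \<notin> interior K"
    and iz: "seg a tz \<in> interior K"
  shows False
proof (cases "t1 < t2")
  case True show ?thesis using TT_lt[OF a t True k1 k2 iz] by blast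
next
  case False then have "t2 < t1" using ne by simp
  then show ?thesis using TT_lt[OF a t(2,1,3) _ k2 k1 iz] by simp
qed

end


context setting begin

definition TS :: "arc \<Rightarrow> real set" where "TS a = {t\<in>{0..1}. seg a t \<in> K}"

lemma TS_compact: "compact (TS a)"
proof -
  have "continuous (at t) (seg a)" for t unfolding seg_def by (intro continuous_intros)
  then have "closed (seg a -` K)" using continuous_closed_vimage K_closed by blast
  moreover have "TS a = {0..1} \<inter> seg a -` K" by (auto simp: TS_def)
  ultimately show ?thesis by (simp add: compact_Int_closed)
qed

lemma psi_pos_den: "a \<in> D \<Longrightarrow> t \<in> TS a \<Longrightarrow> inner u0 (seg a t) > 0"
  using K_u0_pos seg_nz validD by (auto simp: TS_def)

lemma TS_cont: assumes "a \<in> D" shows "continuous_on (TS a) (\<lambda>t. psi w (seg a t))"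
proof -
  have "\<forall>t\<in>TS a. inner u0 ((1 - t) *\<^sub>R fst a + t *\<^sub>R snd a) \<noteq> 0"
    using psi_pos_den[OF assms] unfolding seg_def by (metis less_irrefl)
  then show ?thesis unfolding psi_def seg_def by (intro continuous_intros) auto
qed

lemma TS_max: assumes "a \<in> D" "TS a \<noteq> {}"
  shows "\<exists>t\<in>TS a. \<forall>s\<in>TS a. psi w (seg a s) \<le> psi w (seg a t)"
  using continuous_attains_sup[OF TS_compact assms(2) TS_cont[OF assms(1)]] .

lemma mainwalk:
  assumes w: "\<forall>a\<in>D. dd a \<noteq> 0 \<longrightarrow> inner w (dd a) \<noteq> 0"
    and az: "az \<in> D" "tz \<in> {0..1}" "seg az tz \<in> interior K" "reach (nrm (seg az tz))"
  shows "\<exists>a t t0. a \<in> D \<and> t \<in> {0..1} \<and> t0 \<in> {0..1} \<and> seg a t \<in> K \<and> seg a t \<notin> interior K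
     \<and> seg a t0 \<in> interior K \<and> int_connected D H x (nrm (seg a t)) \<and> psi w (seg az tz) \<le> psi w (seg a t)"
proof -
  define RA where "RA = {a\<in>D. \<exists>t\<in>{0..1}. seg a t \<in> interior K \<and> reach (nrm (seg a t))}"
  define tm where "tm = (\<lambda>a. SOME t. t \<in> TS a \<and> (\<forall>s\<in>TS a. psi w (seg a s) \<le> psi w (seg a t)))"
  define val where "val = (\<lambda>a. psi w (seg a (tm a)))"
  have tm: "tm a \<in> TS a \<and> (\<forall>s\<in>TS a. psi w (seg a s) \<le> psi w (seg a (tm a)))" if "a \<in> RA" for a
  proof -
    have aD: "a \<in> D" using that by (simp add: RA_def)
    have "TS a \<noteq> {}" using that interior_subset by (fastforce simp: RA_def TS_def)
    then have "\<exists>t. t \<in> TS a \<and> (\<forall>s\<in>TS a. psi w (seg a s) \<le> psi w (seg a t))" using TS_max[OF aD] by blast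
    then show ?thesis unfolding tm_def by (rule someI_ex)
  qed
  have finRA: "finite RA" using finD by (simp add: RA_def)
  have azRA: "az \<in> RA" using az by (auto simp: RA_def)
  define M where "M = Max (val ` RA)"
  have "M \<in> val ` RA" unfolding M_def using finRA azRA by (intro Max_in) auto
  then obtain as where as: "as \<in> RA" "val as = M" by auto
  have maxv: "val b \<le> val as" if "b \<in> RA" for b using as finRA that by (simp add: M_def)
  obtain t0 where t0: "t0 \<in> {0..1}" "seg as t0 \<in> interior K" "reach (nrm (seg as t0))"
    using as(1) by (auto simp: RA_def)
  have asD: "as \<in> D" using as(1) by (simp add: RA_def)
  have va: "valid_arc as" using validD asD .
  define ts where "ts = tm as"
  have ts: "ts \<in> TS as" "\<forall>s\<in>TS as. psi w (seg as s) \<le> psi w (seg as ts)" using tm[OF as(1)] by (auto simp: ts_def)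
  have ts01: "ts \<in> {0..1}" "seg as ts \<in> K" using ts(1) by (auto simp: TS_def)
  show ?thesis
  proof (cases "seg as ts \<in> interior K")
    case True
    have ddas: "inner w (dd as) \<noteq> 0" using w asD dd_nz[OF asD ts01(2)] by blast
    have "ts \<notin> {0<..<1}"
    proof
      assume "ts \<in> {0<..<1}"
      then obtain t' where t': "t' \<in> {0..1}" "seg as t' \<in> interior K" "psi w (seg as ts) < psi w (seg as t')"
        using better_int[OF asD _ True ddas] by blast
      then have "t' \<in> TS as" using interior_subset by (auto simp: TS_def)
      then show False using ts(2) t'(3) by fastforce
    qed
    then have "ts = 0 \<or> ts = 1" using ts01 by auto
    then have eend: "nrm (seg as ts) = fst as \<or> nrm (seg as ts) = snd as"
      using valid_norms[OF va] by (auto simp: nrm_unit)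
    define e where "e = nrm (seg as ts)"
    have re: "reach e" unfolding e_def using reach_ext[OF asD t0(1) ts01(1) t0(3) t0(2) True] .
    have ei: "e \<in> sph_interior H" unfolding e_def using Hint_iff seg_nz[OF va] True by blast
    obtain b where b: "b \<in> D" "e \<in> arc_relint b"
      using SD eend unfolding spherical_diagram_def e_def using asD by metis
    have vb: "valid_arc b" using validD b(1) .
    then have "fst b \<noteq> snd b" by (simp add: valid_arc_def)
    then obtain s where s: "s \<in> {0<..<1}" "e = nrm (seg b s)" using b(2) arc_relint_eq by auto
    have sb: "seg b s \<in> interior K" using ei s(2) Hint_iff seg_nz[OF vb] by auto
    have bRA: "b \<in> RA" using b(1) s sb re unfolding RA_def by auto
    have ddb: "inner w (dd b) \<noteq> 0" using w b(1) dd_nz[OF b(1)] sb interior_subset by blast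
    obtain t' where t': "t' \<in> {0..1}" "seg b t' \<in> interior K" "psi w (seg b s) < psi w (seg b t')"
      using better_int[OF b(1) s(1) sb ddb] by blast
    have "t' \<in> TS b" using t' interior_subset by (auto simp: TS_def)
    then have "psi w (seg b t') \<le> val b" using tm[OF bRA] by (simp add: val_def)
    also have "\<dots> \<le> val as" using maxv[OF bRA] .
    also have "val as = psi w e" unfolding val_def e_def ts_def[symmetric] using psi_nrm seg_nz[OF va] by simp
    also have "psi w e = psi w (seg b s)" using s(2) psi_nrm seg_nz[OF vb] by simp
    finally show ?thesis using t'(3) by simp
  next
    case False
    have ic: "int_connected D H x (nrm (seg as ts))"
      using reach_conn[OF asD t0(1) ts01(1) t0(3) t0(2) ts01(2)] .
    have "tz \<in> TS az" using az interior_subset by (auto simp: TS_def)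
    then have "psi w (seg az tz) \<le> val az" using tm[OF azRA] by (simp add: val_def)
    also have "\<dots> \<le> val as" using maxv[OF azRA] .
    finally have "psi w (seg az tz) \<le> psi w (seg as ts)" by (simp add: val_def ts_def)
    then show ?thesis using asD ts01 False t0 ic by blast
  qed
qed

end


lemma OV_snd:
  fixes n :: "real^3"
  assumes vb: "valid_arc b" and vc: "valid_arc c" and n: "n \<noteq> 0" "inner n (fst b) = 0" "inner n (snd b) = 0" "inner n (fst c) = 0"
    and e: "snd c \<in> arc_relint b"
  shows "arc_relint b \<inter> arc_relint c \<noteq> {}"
proof -
  have "fst b \<noteq> snd b" using vb by (simp add: valid_arc_def)
  then obtain s where s: "s \<in> {0<..<1}" "snd c = nrm (seg b s)" using e arc_relint_eq by auto
  define l where "l = 1 / norm (seg b s)"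
  have l: "l > 0" using seg_nz[OF vb] by (simp add: l_def)
  have qc: "snd c = l *\<^sub>R seg b s" using s(2) by (simp add: nrm_eq l_def)
  have "(fst b \<times> snd b) \<bullet> fst c = 0" using det_zero[OF n(1) n(2) n(3) n(4)] .
  then obtain \<alpha> \<beta> where pc: "fst c = \<alpha> *\<^sub>R fst b + \<beta> *\<^sub>R snd b" using in_span2 valid_cross[OF vb] by blast
  define AA where "AA = (\<lambda>t::real. (1 - t) * \<alpha> + t * (l * (1 - s)))"
  define BB where "BB = (\<lambda>t::real. (1 - t) * \<beta> + t * (l * s))"
  have sc: "seg c t = AA t *\<^sub>R fst b + BB t *\<^sub>R snd b" for t
    unfolding seg_def pc qc AA_def BB_def by (simp add: algebra_simps seg_def)
  have a1: "AA 1 > 0" "BB 1 > 0" using l s by (auto simp: AA_def BB_def)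
  have "((\<lambda>t. AA t) \<longlongrightarrow> AA 1) (at_left 1)" unfolding AA_def by (intro tendsto_intros)
  then have ea: "eventually (\<lambda>t. 0 < AA t) (at_left 1)" using order_tendstoD(1) a1(1) by blast
  have "((\<lambda>t. BB t) \<longlongrightarrow> BB 1) (at_left 1)" unfolding BB_def by (intro tendsto_intros)
  then have eb: "eventually (\<lambda>t. 0 < BB t) (at_left 1)" using order_tendstoD(1) a1(2) by blast
  have ec: "eventually (\<lambda>t. t \<in> {0<..<1}) (at_left (1::real))" using eventually_at_left_real[of 0 "1::real"] by simp
  have ev: "eventually (\<lambda>t. 0 < AA t \<and> 0 < BB t \<and> t \<in> {0<..<1}) (at_left (1::real))"
    using eventually_conj[OF ea eventually_conj[OF eb ec]] .
  have nb: "at_left (1::real) \<noteq> bot" using trivial_limit_at_left_real[of 1] by (simp add: trivial_limit_def)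
  obtain t where t: "0 < AA t" "0 < BB t" "t \<in> {0<..<1}"
    using eventually_happens'[OF nb ev] by blast
  define \<sigma> where "\<sigma> = BB t / (AA t + BB t)"
  have sg: "\<sigma> \<in> {0<..<1}" using t by (auto simp: \<sigma>_def)
  have h1: "(AA t + BB t) * (1 - \<sigma>) = AA t" using t by (simp add: \<sigma>_def field_simps)
  have h2: "(AA t + BB t) * \<sigma> = BB t" using t by (simp add: \<sigma>_def field_simps)
  have "(AA t + BB t) *\<^sub>R seg b \<sigma> = AA t *\<^sub>R fst b + BB t *\<^sub>R snd b"
    unfolding seg_def scaleR_add_right scaleR_scaleR h1 h2 ..
  also have "\<dots> = seg c t" using sc[of t] by simp
  finally have "(AA t + BB t) *\<^sub>R seg b \<sigma> = seg c t" .
  then have "nrm (seg c t) = nrm (seg b \<sigma>)" using nrm_scale[of "AA t + BB t" "seg b \<sigma>"] t by simp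
  moreover have "nrm (seg c t) \<in> arc_relint c" using vc t(3) arc_relint_eq[of c] by (auto simp: valid_arc_def)
  moreover have "nrm (seg b \<sigma>) \<in> arc_relint b" using vb sg arc_relint_eq[of b] by (auto simp: valid_arc_def)
  ultimately show ?thesis by auto
qed

lemma OV:
  fixes n :: "real^3"
  assumes vb: "valid_arc b" and vc: "valid_arc c" and n: "n \<noteq> 0" "inner n (fst b) = 0" "inner n (snd b) = 0"
    "inner n (fst c) = 0" "inner n (snd c) = 0"
    and e: "e \<in> {fst c, snd c}" "e \<in> arc_relint b"
  shows "arc_relint b \<inter> arc_relint c \<noteq> {}"
proof (cases "e = snd c")
  case True then show ?thesis using OV_snd[OF vb vc n(1-4)] e by simp
next
  case False
  then have ef: "e = fst c" using e by auto
  define c' where "c' = (snd c, fst c)"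
  have vc': "valid_arc c'" using vc unfolding valid_arc_def c'_def by (auto simp: minus_equation_iff)
  have "arc_relint c' = arc_relint c" by (simp add: arc_relint_def c'_def open_segment_commute)
  then show ?thesis using OV_snd[OF vb vc' n(1,2,3)] n(5) e ef by (simp add: c'_def)
qed

context setting begin

lemma NL:
  assumes n: "n \<noteq> 0"
  shows "\<exists>a t. a \<in> D \<and> t \<in> {0..1} \<and> seg a t \<in> interior K \<and> reach (nrm (seg a t)) \<and> inner n (seg a t) \<noteq> 0"
proof (rule ccontr)
  assume "\<not> ?thesis"
  then have H0: "\<And>a t. a \<in> D \<Longrightarrow> t \<in> {0..1} \<Longrightarrow> seg a t \<in> interior K \<Longrightarrow> reach (nrm (seg a t)) \<Longrightarrow> inner n (seg a t) = 0"
    by blast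
  have planar: "inner n (fst a) = 0 \<and> inner n (snd a) = 0"
    if hyp: "a \<in> D" "t0 \<in> {0..1}" "seg a t0 \<in> interior K" "reach (nrm (seg a t0))" for a t0
  proof -
    obtain t' where t': "t' \<in> {0..1}" "t' \<noteq> t0" "seg a t' \<in> interior K" using other_int[OF hyp(1,2,3)] by blast
    have r': "reach (nrm (seg a t'))" using reach_ext[OF hyp(1,2) t'(1) hyp(4) hyp(3) t'(3)] .
    have e1: "(1 - t0) * inner n (fst a) + t0 * inner n (snd a) = 0"
      using H0[OF hyp] by (simp add: seg_def inner_add_right)
    have e2: "(1 - t') * inner n (fst a) + t' * inner n (snd a) = 0"
      using H0[OF hyp(1) t'(1) t'(3) r'] by (simp add: seg_def inner_add_right)
    have "(t' - t0) * (inner n (snd a) - inner n (fst a)) = ((1 - t') * inner n (fst a) + t' * inner n (snd a)) - ((1 - t0) * inner n (fst a) + t0 * inner n (snd a))"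
      by (simp add: algebra_simps)
    then have "(t' - t0) * (inner n (snd a) - inner n (fst a)) = 0" using e1 e2 by simp
    then have "inner n (snd a) = inner n (fst a)" using t'(2) by simp
    then show ?thesis using e1 by (simp add: algebra_simps)
  qed
  from x_U obtain a0 where a0: "a0 \<in> D" "x \<in> arc_set a0" by auto
  then obtain t0 where t0: "t0 \<in> {0..1}" "x = nrm (seg a0 t0)" by (auto simp: arc_set_eq)
  have va0: "valid_arc a0" using validD a0(1) .
  have i0: "seg a0 t0 \<in> interior K" using x_int t0(2) Hint_iff seg_nz[OF va0] by (auto simp: H_def)
  have r0: "reach (nrm (seg a0 t0))" using reach_x t0(2) by simp
  have pa0: "inner n (fst a0) = 0" "inner n (snd a0) = 0" using planar[OF a0(1) t0(1) i0 r0] by auto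
  have key: "seg a0 ts \<notin> interior K"
    if hk: "inner w' (dd a0) \<noteq> 0" "ts \<in> TS a0" "\<forall>s\<in>TS a0. psi w' (seg a0 s) \<le> psi w' (seg a0 ts)" for w' ts
  proof
    assume I: "seg a0 ts \<in> interior K"
    have ts01: "ts \<in> {0..1}" using hk(2) by (simp add: TS_def)
    have "ts \<notin> {0<..<1}"
    proof
      assume "ts \<in> {0<..<1}"
      then obtain t' where t': "t' \<in> {0..1}" "seg a0 t' \<in> interior K" "psi w' (seg a0 ts) < psi w' (seg a0 t')"
        using better_int[OF a0(1) _ I hk(1)] by blast
      then have "t' \<in> TS a0" using interior_subset by (auto simp: TS_def)
      then show False using hk(3) t'(3) by fastforce
    qed
    then have "ts = 0 \<or> ts = 1" using ts01 by auto
    then have eend: "nrm (seg a0 ts) \<in> {fst a0, snd a0}" using valid_norms[OF va0] by (auto simp: nrm_unit)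
    define e where "e = nrm (seg a0 ts)"
    have re: "reach e" unfolding e_def using reach_ext[OF a0(1) t0(1) ts01 r0 i0 I] .
    have ei: "e \<in> sph_interior H" unfolding e_def using Hint_iff seg_nz[OF va0] I by blast
    have "\<exists>b\<in>D. e \<in> arc_relint b" using SD eend a0(1) unfolding spherical_diagram_def e_def by auto
    then obtain b where b: "b \<in> D" "e \<in> arc_relint b" by blast
    have vb: "valid_arc b" using validD b(1) .
    then have "fst b \<noteq> snd b" by (simp add: valid_arc_def)
    then obtain s where s: "s \<in> {0<..<1}" "e = nrm (seg b s)" using b(2) arc_relint_eq by auto
    have sb: "seg b s \<in> interior K" using ei s(2) Hint_iff seg_nz[OF vb] by auto
    have pb: "inner n (fst b) = 0" "inner n (snd b) = 0" using planar[OF b(1) _ sb] s re by auto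
    have ov: "arc_relint b \<inter> arc_relint a0 \<noteq> {}"
      using OV[OF vb va0 n pb pa0 eend[folded e_def] b(2)] .
    then have "b = a0" using SD b(1) a0(1) unfolding spherical_diagram_def by blast
    then have "e \<in> arc_relint a0" using b(2) by simp
    moreover have "fst a0 \<noteq> snd a0" using va0 by (simp add: valid_arc_def)
    ultimately obtain s' where s': "s' \<in> {0<..<1}" "e = nrm (seg a0 s')" using arc_relint_eq by auto
    then show False using endpoint_not_relint[OF va0] eend e_def by auto
  qed
  define w where "w = dd a0"
  have dnz: "dd a0 \<noteq> 0" using dd_nz[OF a0(1)] i0 interior_subset by blast
  have wpos: "inner w (dd a0) > 0" using dnz by (simp add: w_def)
  have TSne: "TS a0 \<noteq> {}" "t0 \<in> TS a0" using t0 i0 interior_subset by (auto simp: TS_def)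
  obtain tM where tM: "tM \<in> TS a0" "\<forall>s\<in>TS a0. psi w (seg a0 s) \<le> psi w (seg a0 tM)"
    using TS_max[OF a0(1) TSne(1)] by blast
  obtain tm where tm: "tm \<in> TS a0" "\<forall>s\<in>TS a0. psi (-w) (seg a0 s) \<le> psi (-w) (seg a0 tm)"
    using TS_max[OF a0(1) TSne(1)] by blast
  have nM: "seg a0 tM \<notin> interior K" using key[OF _ tM] wpos by simp
  have nm: "seg a0 tm \<notin> interior K" using key[of "-w", OF _ tm] wpos by simp
  obtain t' where t': "t' \<in> {0..1}" "t' \<noteq> t0" "seg a0 t' \<in> interior K" using other_int[OF a0(1) t0(1) i0] by blast
  have t'T: "t' \<in> TS a0" using t' interior_subset by (auto simp: TS_def)
  have neq: "psi w (seg a0 t0) \<noteq> psi w (seg a0 t')"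
  proof (cases "t0 < t'")
    case True then show ?thesis
      using psi_mono(1)[OF psi_pos_den[OF a0(1) TSne(2)] psi_pos_den[OF a0(1) t'T] True wpos] by simp
  next
    case False then have "t' < t0" using t'(2) by simp
    then show ?thesis using psi_mono(1)[OF psi_pos_den[OF a0(1) t'T] psi_pos_den[OF a0(1) TSne(2)] _ wpos] by simp
  qed
  have "tM \<noteq> tm"
  proof
    assume eq: "tM = tm"
    have "psi (-w) v = - psi w v" for v by (simp add: psi_def)
    then have lo: "\<forall>s\<in>TS a0. psi w (seg a0 tM) \<le> psi w (seg a0 s)" using tm(2) eq by simp
    have "psi w (seg a0 t0) = psi w (seg a0 tM)" using tM(2) lo TSne(2) by (meson antisym)
    moreover have "psi w (seg a0 t') = psi w (seg a0 tM)" using tM(2) lo t'T by (meson antisym)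
    ultimately show False using neq by simp
  qed
  moreover have "tM \<in> {0..1}" "seg a0 tM \<in> K" "tm \<in> {0..1}" "seg a0 tm \<in> K" using tM(1) tm(1) by (auto simp: TS_def)
  ultimately show False using TT[OF a0(1) _ _ t0(1) _ _ nM _ nm i0] by blast
qed

end


context setting begin

lemma pos_nrm: "v \<noteq> 0 \<Longrightarrow> inner u0 v > 0 \<Longrightarrow> inner u0 (nrm v) > 0"
  by (simp add: nrm_eq)

lemma bnd: assumes "v \<in> K" "v \<noteq> 0" shows "inner d v / inner u0 v \<le> norm d / m0"
proof -
  have u: "inner u0 v \<ge> m0 * norm v" using K_u0[OF assms(1)] .
  have nv: "norm v > 0" using assms(2) by simp
  have up: "inner u0 v > 0" using K_u0_pos assms by blast
  have "inner d v / inner u0 v \<le> (norm d * norm v) / inner u0 v"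
    using norm_cauchy_schwarz[of d v] up by (intro divide_right_mono) auto
  also have "\<dots> \<le> (norm d * norm v) / (m0 * norm v)"
    using u m0_pos nv up by (intro divide_left_mono) (auto intro!: mult_pos_pos)
  also have "\<dots> = norm d / m0" using nv by simp
  finally show ?thesis .
qed

theorem main_loc:
  shows "\<exists>a1 a2 a3 y1 y2 y3. a1 \<in> D \<and> a2 \<in> D \<and> a3 \<in> D \<and> distinct [a1, a2, a3] \<and> distinct [y1, y2, y3] \<and>
           thrusts a1 H y1 \<and> thrusts a2 H y2 \<and> thrusts a3 H y3 \<and>
           \<not> (\<exists>E. sph_edge H E \<and> y1 \<in> E \<and> y2 \<in> E \<and> y3 \<in> E) \<and>
           int_connected D H x y1 \<and> int_connected D H x y2 \<and> int_connected D H x y3"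
proof -
  from x_U obtain a0 where a0: "a0 \<in> D" "x \<in> arc_set a0" by auto
  then obtain t0 where t0: "t0 \<in> {0..1}" "x = nrm (seg a0 t0)" by (auto simp: arc_set_eq)
  have va0: "valid_arc a0" using validD a0(1) .
  have i0: "seg a0 t0 \<in> interior K" using x_int t0(2) Hint_iff seg_nz[OF va0] by (auto simp: H_def)
  have r0: "reach (nrm (seg a0 t0))" using reach_x t0(2) by simp
  obtain w1 where w1: "\<forall>a\<in>D. dd a \<noteq> 0 \<longrightarrow> inner w1 (dd a) \<noteq> 0" using generic_exists[of UNIV] by auto
  obtain a1 t1 s1 where A1: "a1 \<in> D" "t1 \<in> {0..1}" "s1 \<in> {0..1}" "seg a1 t1 \<in> K" "seg a1 t1 \<notin> interior K"
     "seg a1 s1 \<in> interior K" "int_connected D H x (nrm (seg a1 t1))"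
    using mainwalk[OF w1 a0(1) t0(1) i0 r0] by blast
  have va1: "valid_arc a1" using validD A1(1) .
  define v0 where "v0 = seg a0 t0"
  define v1 where "v1 = seg a1 t1"
  have nz0: "v0 \<noteq> 0" "v1 \<noteq> 0" using seg_nz va0 va1 by (auto simp: v0_def v1_def)
  have up0: "inner u0 v0 > 0" "inner u0 v1 > 0" using K_u0_pos nz0 i0 interior_subset A1(4)
    by (auto simp: v0_def v1_def)
  define e where "e = (1 / inner u0 v0) *\<^sub>R v0 - (1 / inner u0 v1) *\<^sub>R v1"
  have enz: "e \<noteq> 0"
  proof
    assume "e = 0"
    then have "(1 / inner u0 v0) *\<^sub>R v0 = (1 / inner u0 v1) *\<^sub>R v1" by (simp add: e_def)
    then have "nrm ((1 / inner u0 v0) *\<^sub>R v0) = nrm ((1 / inner u0 v1) *\<^sub>R v1)" by simp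
    then have "nrm v0 = nrm v1" using nrm_scale up0 by simp
    moreover have "nrm v0 \<in> sph_interior H" using Hint_iff nz0 i0 by (simp add: v0_def)
    moreover have "nrm v1 \<notin> sph_interior H" using Hint_iff nz0 A1(5) by (simp add: v1_def)
    ultimately show False by simp
  qed
  obtain w2 where w2: "w2 \<in> {w. inner e w > 0}" "\<forall>a\<in>D. dd a \<noteq> 0 \<longrightarrow> inner w2 (dd a) \<noteq> 0"
  proof -
    have o: "open {w. inner e w > 0}" by (rule open_halfspace_gt)
    have "e \<in> {w. inner e w > 0}" using enz by simp
    then show ?thesis using generic_exists[OF o] that by blast
  qed
  have "psi w2 v0 - psi w2 v1 = inner w2 e"
    by (simp add: psi_lin e_def inner_diff_right)
  then have lt2: "psi w2 v1 < psi w2 v0" using w2(1) by (simp add: inner_commute)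
  obtain a2 t2 s2 where A2: "a2 \<in> D" "t2 \<in> {0..1}" "s2 \<in> {0..1}" "seg a2 t2 \<in> K" "seg a2 t2 \<notin> interior K"
     "seg a2 s2 \<in> interior K" "int_connected D H x (nrm (seg a2 t2))" "psi w2 v0 \<le> psi w2 (seg a2 t2)"
    using mainwalk[OF w2(2) a0(1) t0(1) i0 r0] unfolding v0_def by blast
  have va2: "valid_arc a2" using validD A2(1) .
  define v2 where "v2 = seg a2 t2"
  have nz2: "v2 \<noteq> 0" using seg_nz va2 by (auto simp: v2_def)
  have up2: "inner u0 v2 > 0" using K_u0_pos nz2 A2(4) by (auto simp: v2_def)
  define y1 where "y1 = nrm v1"
  define y2 where "y2 = nrm v2"
  have y12: "y1 \<noteq> y2"
  proof
    assume "y1 = y2"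
    then have "psi w2 v1 = psi w2 v2" using psi_nrm nz0(2) nz2 by (metis y1_def y2_def)
    then show False using lt2 A2(8) by (simp add: v2_def)
  qed
  have uy: "inner u0 y1 > 0" "inner u0 y2 > 0" using pos_nrm nz0(2) nz2 up0(2) up2 by (auto simp: y1_def y2_def)
  have ny: "norm y1 = 1" "norm y2 = 1" using nrm_norm nz0(2) nz2 by (auto simp: y1_def y2_def)
  have "y2 \<noteq> - y1" using uy by auto
  then have nn: "y1 \<times> y2 \<noteq> 0" using cross_unit_nz[OF ny y12] by simp
  define n where "n = y1 \<times> y2"
  have ny0: "inner n y1 = 0" "inner n y2 = 0" using dot_cross_self by (auto simp: n_def inner_commute)
  obtain a' t' where A': "a' \<in> D" "t' \<in> {0..1}" "seg a' t' \<in> interior K" "reach (nrm (seg a' t'))"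
    "inner n (seg a' t') \<noteq> 0" using NL nn unfolding n_def by blast
  have va': "valid_arc a'" using validD A'(1) .
  define vz where "vz = seg a' t'"
  have nzz: "vz \<noteq> 0" using seg_nz va' by (auto simp: vz_def)
  have kz: "vz \<in> K" using A'(3) interior_subset by (auto simp: vz_def)
  have upz: "inner u0 vz > 0" using K_u0_pos nzz kz by blast
  define n' where "n' = (if inner n vz > 0 then n else - n)"
  have n'z: "inner n' vz > 0" using A'(5) by (auto simp: n'_def vz_def)
  have n'n: "inner n' v = 0 \<longleftrightarrow> inner n v = 0" for v by (auto simp: n'_def)
  define p where "p = psi n' vz"
  have pp: "p > 0" using n'z upz by (simp add: p_def psi_def)
  define r where "r = m0 * p / 2"
  have rp: "r > 0" using pp m0_pos by (simp add: r_def)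
  obtain w3 where w3: "w3 \<in> ball n' r" "\<forall>a\<in>D. dd a \<noteq> 0 \<longrightarrow> inner w3 (dd a) \<noteq> 0"
    using generic_exists[OF open_ball, of n' r] rp by auto
  obtain a3 t3 s3 where A3: "a3 \<in> D" "t3 \<in> {0..1}" "s3 \<in> {0..1}" "seg a3 t3 \<in> K" "seg a3 t3 \<notin> interior K"
     "seg a3 s3 \<in> interior K" "int_connected D H x (nrm (seg a3 t3))" "psi w3 vz \<le> psi w3 (seg a3 t3)"
    using mainwalk[OF w3(2) A'(1) A'(2) A'(3) A'(4)] unfolding vz_def by blast
  have va3: "valid_arc a3" using validD A3(1) .
  define v3 where "v3 = seg a3 t3"
  have nz3: "v3 \<noteq> 0" using seg_nz va3 by (auto simp: v3_def)
  have k3: "v3 \<in> K" using A3(4) by (simp add: v3_def)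
  define y3 where "y3 = nrm v3"
  have n3: "inner n' v3 \<noteq> 0"
  proof
    assume z: "inner n' v3 = 0"
    define \<delta> where "\<delta> = w3 - n'"
    have nd: "norm \<delta> < r" using w3(1) by (simp add: \<delta>_def dist_norm norm_minus_commute)
    have sp: "psi w3 v = psi n' v + inner \<delta> v / inner u0 v" for v
      by (simp add: psi_def \<delta>_def inner_diff_left add_divide_distrib[symmetric])
    have "psi w3 v3 = inner \<delta> v3 / inner u0 v3" using sp[of v3] z by (simp add: psi_def)
    also have "\<dots> \<le> norm \<delta> / m0" using bnd[OF k3 nz3] .
    finally have b1: "psi w3 v3 \<le> norm \<delta> / m0" .
    have "inner (- \<delta>) vz / inner u0 vz \<le> norm (- \<delta>) / m0" using bnd[OF kz nzz] .
    then have b2: "- (norm \<delta> / m0) \<le> inner \<delta> vz / inner u0 vz" by simp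
    have "p - norm \<delta> / m0 \<le> psi w3 vz" using sp[of vz] b2 by (simp add: p_def)
    also have "\<dots> \<le> psi w3 v3" using A3(8) by (simp add: v3_def)
    finally have "p \<le> 2 * (norm \<delta> / m0)" using b1 by simp
    also have "\<dots> < 2 * (r / m0)" using nd m0_pos by (simp add: divide_strict_right_mono)
    also have "\<dots> = p" using m0_pos by (simp add: r_def)
    finally show False by simp
  qed
  have ny3: "inner n y3 \<noteq> 0"
  proof -
    have "inner n v3 \<noteq> 0" using n3 n'n by blast
    then show ?thesis using nz3 by (simp add: y3_def nrm_eq)
  qed
  have y31: "y3 \<noteq> y1" "y3 \<noteq> y2" using ny3 ny0 by auto
  have d12: "a1 \<noteq> a2"
  proof
    assume eq: "a1 = a2"
    have "t1 \<noteq> t2" using y12 eq by (auto simp: y1_def y2_def v1_def v2_def)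
    then show False using TT[OF A1(1) A1(2) _ A1(3) _ A1(4,5) _ _ A1(6)] A2(2,4,5) eq by blast
  qed
  have d13: "a1 \<noteq> a3"
  proof
    assume eq: "a1 = a3"
    have "t1 \<noteq> t3" using y31 eq by (auto simp: y1_def y3_def v1_def v3_def)
    then show False using TT[OF A1(1) A1(2) _ A1(3) _ A1(4,5) _ _ A1(6)] A3(2,4,5) eq by blast
  qed
  have d23: "a2 \<noteq> a3"
  proof
    assume eq: "a2 = a3"
    have "t2 \<noteq> t3" using y31 eq by (auto simp: y2_def y3_def v2_def v3_def)
    then show False using TT[OF A2(1) A2(2) _ A2(3) _ A2(4,5) _ _ A2(6)] A3(2,4,5) eq by blast
  qed
  have th: "thrusts a1 H y1" "thrusts a2 H y2" "thrusts a3 H y3"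
    using thrust_of[OF A1(1) A1(2) A1(3) A1(4) A1(5) A1(6)] thrust_of[OF A2(1) A2(2) A2(3) A2(4) A2(5) A2(6)]
      thrust_of[OF A3(1) A3(2) A3(3) A3(4) A3(5) A3(6)] by (simp_all add: y1_def y2_def y3_def v1_def v2_def v3_def)
  have noedge: "\<not> (\<exists>E. sph_edge H E \<and> y1 \<in> E \<and> y2 \<in> E \<and> y3 \<in> E)"
  proof
    assume "\<exists>E. sph_edge H E \<and> y1 \<in> E \<and> y2 \<in> E \<and> y3 \<in> E"
    then obtain E ue where E: "ue \<noteq> 0" "E = {z\<in>H. inner ue z = 0}" "y1 \<in> E" "y2 \<in> E" "y3 \<in> E"
      unfolding sph_edge_def by blast
    then have "inner ue y1 = 0" "inner ue y2 = 0" "inner ue y3 = 0" by auto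
    then have "((y1 \<times> y2) \<bullet> y3) *\<^sub>R ue = 0" using triple_id[of y1 y2 y3 ue] by simp
    then have "inner n y3 = 0" using E(1) by (simp add: n_def)
    then show False using ny3 by simp
  qed
  show ?thesis
    apply (rule exI[of _ a1], rule exI[of _ a2], rule exI[of _ a3], rule exI[of _ y1], rule exI[of _ y2], rule exI[of _ y3])
    using A1(1) A2(1) A3(1) d12 d13 d23 y12 y31 th noedge A1(7) A2(7) A3(7)
    by (auto simp: y1_def y2_def y3_def v1_def v2_def v3_def)
qed

end

lemma pick_pole:
  fixes P A :: "(real^3) set"
  assumes fin: "finite P" and card: "card A = card P" and sub: "A \<subseteq> P \<union> uminus ` P"
    and noant: "\<forall>a\<in>A. - a \<notin> A" and p: "p \<in> P"
  shows "p \<in> A \<or> - p \<in> A"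
proof (rule ccontr)
  assume h: "\<not> (p \<in> A \<or> - p \<in> A)"
  define g where "g = (\<lambda>z::real^3. if z \<in> P then z else - z)"
  have img: "g ` A \<subseteq> P - {p}"
  proof
    fix y assume "y \<in> g ` A"
    then obtain z where z: "z \<in> A" "y = g z" by auto
    show "y \<in> P - {p}"
    proof (cases "z \<in> P")
      case True then show ?thesis using z h by (auto simp: g_def)
    next
      case False
      then obtain q where q: "q \<in> P" "z = - q" using sub z(1) by auto
      then show ?thesis using z h False by (auto simp: g_def)
    qed
  qed
  have inj: "inj_on g A"
  proof
    fix z1 z2 assume z: "z1 \<in> A" "z2 \<in> A" "g z1 = g z2"
    show "z1 = z2"
      using z noant by (cases "z1 \<in> P"; cases "z2 \<in> P") (auto simp: g_def)
  qed
  have "card A \<le> card (P - {p})" using card_inj_on_le[OF inj img] fin by simp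
  also have "\<dots> < card P" by (rule card_Diff1_less[OF fin p])
  finally show False using card by simp
qed



theorem mainTheorem18:
  fixes k :: nat and D :: "arc set" and P A :: "(real^3) set" and f :: "arc \<Rightarrow> real^3"
    and a0 :: arc and x :: "real^3"
  assumes "k_oriented_by k D P f"
    and "attractor k P A"
    and "sph_hull A \<noteq> S2"
    and "a0 \<in> D" and "x \<in> arc_set a0" and "x \<in> sph_interior (sph_hull A)"
  shows "\<exists>a1 a2 a3 y1 y2 y3.
           a1 \<in> D \<and> a2 \<in> D \<and> a3 \<in> D \<and> distinct [a1, a2, a3] \<and> distinct [y1, y2, y3] \<and>
           thrusts a1 (sph_hull A) y1 \<and> thrusts a2 (sph_hull A) y2 \<and> thrusts a3 (sph_hull A) y3 \<and>
           \<not> (\<exists>E. sph_edge (sph_hull A) E \<and> y1 \<in> E \<and> y2 \<in> E \<and> y3 \<in> E) \<and>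
           int_connected D (sph_hull A) x y1 \<and> int_connected D (sph_hull A) x y2 \<and>
           int_connected D (sph_hull A) x y3"
proof -
  have ko: "spherical_diagram D" "P \<subseteq> S2" "finite P" "card P = k" "\<forall>p\<in>P. - p \<notin> P"
    "\<forall>a\<in>D. f a \<in> P \<and> (\<exists>u. u \<noteq> 0 \<and> inner u (f a) = 0 \<and> (\<forall>z\<in>arc_set a. inner u z = 0)) \<and>
        f a \<notin> arc_set a \<and> - f a \<notin> arc_set a"
    using assms(1) unfolding k_oriented_by_def by auto
  have at: "A \<subseteq> P \<union> uminus ` P" "finite A" "card A = k" "\<forall>a\<in>A. - a \<notin> A"
    using assms(2) unfolding attractor_def by auto
  obtain u0 where u0: "\<forall>a\<in>A. inner u0 a > 0"
    using assms(3) unfolding sph_hull_def by (auto split: if_splits)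
  have neA: "A \<noteq> {}"
  proof
    assume "A = {}"
    then have "sph_hull A = {}" by (simp add: sph_hull_def)
    then show False using assms(6) by (simp add: sph_interior_def)
  qed
  have AS2: "A \<subseteq> S2"
  proof
    fix a assume "a \<in> A"
    then have "a \<in> P \<or> - a \<in> P" using at(1) by (auto simp: image_iff minus_equation_iff)
    then show "a \<in> S2" using ko(2) by (auto simp: S2_iff)
  qed
  interpret setting D A f u0 x
  proof
    show "spherical_diagram D" using ko(1) .
    show "\<And>a. a \<in> D \<Longrightarrow> f a \<in> A \<or> - f a \<in> A"
      using pick_pole[OF ko(3) _ at(1) at(4)] ko(4) at(3) ko(6) by auto
    show "\<And>a. a \<in> D \<Longrightarrow> \<exists>u. u \<noteq> 0 \<and> inner u (f a) = 0 \<and> (\<forall>z\<in>arc_set a. inner u z = 0)" using ko(6) by blast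
    show "\<And>a. a \<in> D \<Longrightarrow> f a \<notin> arc_set a \<and> - f a \<notin> arc_set a" using ko(6) by blast
    show "finite A" using at(2) .
    show "A \<noteq> {}" using neA .
    show "A \<subseteq> S2" using AS2 .
    show "\<And>a. a \<in> A \<Longrightarrow> inner u0 a > 0" using u0 by blast
    show "x \<in> sph_interior (sph_hull A)" using assms(6) .
    show "x \<in> \<Union>(arc_set ` D)" using assms(4,5) by blast
  qed
  show ?thesis using main_loc unfolding H_def .
qed


end
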